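(* Let $g>0$ and let $(\rho A):[0,1]\to(0,\infty)$ be a continuous mass density, with $F(s):=\int_0^s g(\rho A)(\xi)\,d\xi$. Let $\hat\nu:\mathbb R\times[0,1]\to[\nu_0,\nu_1]$ be a stretch-limiting constitutive function as described in the context. Let $b\in[\nu_0,\nu_1]$. Then there exists $N(0)\in\mathbb R$ such that, with $$N(s):=N(0)+F(s),\qquad \mathbf n(s):=N(s)\mathbf k,\qquad \mathbf r(s):=\Big(\int_0^s\hat\nu(N(\xi),\xi)\,d\xi\Big)\mathbf k,\qquad s\in[0,1],$$ the triple $(N,\mathbf n,\mathbf r)$ solves the vertical catenary problem $$\mathbf n(s)=\mathbf n(0)+F(s)\mathbf k,\quad \mathbf r(s)=z(s)\mathbf k,\quad \mathbf r(0)=\mathbf 0,\quad \mathbf r(1)=b\mathbf k,$$ with $\mathbf n(s)=N(s)\frac{\mathbf r_s(s)}{|\mathbf r_s(s)|}$ and $|\mathbf r_s(s)|=\hat\nu(N(s),s)$ for all $s\in[0,1]$. If $b\in(\nu_0,\nu_1)$, then $N(0)$ is unique (and hence $\mathbf r$ is unique). If $b=\nu_0$ or $b=\nu_1$, then $\mathbf r$ is unique.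
   Context: $\{\mathbf i,\mathbf j,\mathbf k\}$ is a fixed right-handed orthonormal basis of Euclidean 3-space, with $\mathbf k$ vertical. A string configuration is a curve $s\mapsto\mathbf r(s)$, $s\in[0,1]$, with stretch $\nu(s)=|\mathbf r_s(s)|>0$; $N$ is the tension and $\mathbf n=N\mathbf r_s/|\mathbf r_s|$ the contact force. Stretch-limited constitutive relation: $\nu(s)=\hat\nu(N(s),s)$, where there exist constants $N_0<0<N_1$ and $0<\nu_0<1<\nu_1$ such that for all $s$: $\hat\nu(N,s)=\nu_0$ for $N\le N_0$, $\hat\nu(N,s)=\nu_1$ for $N\ge N_1$, $\hat\nu(\cdot,s)\in C^\infty([N_0,N_1];[\nu_0,\nu_1])$, $\hat\nu(0,s)=1$, and there is $c>0$ with $\partial_N\hat\nu(N,s)\ge c$ for all $(N,s)\in[N_0,N_1]\times[0,1]$. *)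

theory Defs
  imports "HOL-Analysis.Analysis"
begin

definition ivec :: "real^3" where "ivec = axis 1 1"
definition jvec :: "real^3" where "jvec = axis 2 1"
definition kvec :: "real^3" where "kvec = axis 3 1"

text \<open>C-infinity on a closed interval: a tower of derivatives (one-sided at the ends).\<close>
definition smooth_on_interval :: "(real \<Rightarrow> real) \<Rightarrow> real \<Rightarrow> real \<Rightarrow> (nat \<Rightarrow> real \<Rightarrow> real) \<Rightarrow> bool" where
  "smooth_on_interval f a b D \<longleftrightarrow>
     D 0 = f \<and> (\<forall>m. \<forall>x\<in>{a..b}. (D m has_real_derivative D (Suc m) x) (at x within {a..b}))"

definition stretch_limited ::
  "(real \<Rightarrow> real \<Rightarrow> real) \<Rightarrow> real \<Rightarrow> real \<Rightarrow> real \<Rightarrow> real \<Rightarrow> bool" where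
  "stretch_limited nuhat N0 N1 nu0 nu1 \<longleftrightarrow>
     N0 < 0 \<and> 0 < N1 \<and> 0 < nu0 \<and> nu0 < 1 \<and> 1 < nu1 \<and>
     (\<forall>s\<in>{0..1}. \<forall>N. N \<le> N0 \<longrightarrow> nuhat N s = nu0) \<and>
     (\<forall>s\<in>{0..1}. \<forall>N. N \<ge> N1 \<longrightarrow> nuhat N s = nu1) \<and>
     (\<forall>s\<in>{0..1}. \<forall>N\<in>{N0..N1}. nu0 \<le> nuhat N s \<and> nuhat N s \<le> nu1) \<and>
     (\<forall>s\<in>{0..1}. nuhat 0 s = 1) \<and>
     (\<exists>c>0. \<forall>s\<in>{0..1}. \<exists>D. smooth_on_interval (\<lambda>N. nuhat N s) N0 N1 D \<and>
                                 (\<forall>N\<in>{N0..N1}. D 1 N \<ge> c))"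

definition catF :: "real \<Rightarrow> (real \<Rightarrow> real) \<Rightarrow> real \<Rightarrow> real" where
  "catF g rhoA s = integral {0..s} (\<lambda>\<xi>. g * rhoA \<xi>)"

definition vertical_catenary_solution ::
  "(real \<Rightarrow> real \<Rightarrow> real) \<Rightarrow> real \<Rightarrow> (real \<Rightarrow> real) \<Rightarrow> real \<Rightarrow>
   (real \<Rightarrow> real) \<Rightarrow> (real \<Rightarrow> real^3) \<Rightarrow> (real \<Rightarrow> real^3) \<Rightarrow> bool" where
  "vertical_catenary_solution nuhat g rhoA b N n r \<longleftrightarrow>
     (\<forall>s\<in>{0..1}. n s = n 0 + catF g rhoA s *\<^sub>R kvec) \<and>
     (\<exists>z. \<forall>s\<in>{0..1}. r s = z s *\<^sub>R kvec) \<and>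
     r 0 = 0 \<and> r 1 = b *\<^sub>R kvec \<and>
     (\<forall>s\<in>{0..1}. \<exists>v. (r has_vector_derivative v) (at s within {0..1}) \<and> v \<noteq> 0 \<and>
          n s = N s *\<^sub>R ((1 / norm v) *\<^sub>R v) \<and> norm v = nuhat (N s) s)"

definition catN :: "real \<Rightarrow> (real \<Rightarrow> real) \<Rightarrow> real \<Rightarrow> real \<Rightarrow> real" where
  "catN g rhoA a s = a + catF g rhoA s"
definition catn :: "real \<Rightarrow> (real \<Rightarrow> real) \<Rightarrow> real \<Rightarrow> real \<Rightarrow> real^3" where
  "catn g rhoA a s = catN g rhoA a s *\<^sub>R kvec"
definition catr :: "(real \<Rightarrow> real \<Rightarrow> real) \<Rightarrow> real \<Rightarrow> (real \<Rightarrow> real) \<Rightarrow> real \<Rightarrow> real \<Rightarrow> real^3" where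
  "catr nuhat g rhoA a s = integral {0..s} (\<lambda>\<xi>. nuhat (catN g rhoA a \<xi>) \<xi>) *\<^sub>R kvec"

end

theory Submission imports Defs begin

lemma nu_strict:
  assumes SL: "stretch_limited nuhat N0 N1 nu0 nu1"
    and s: "s \<in> {0..1}" and xy: "N0 \<le> x" "x < y" "y \<le> N1"
  shows "nuhat x s < nuhat y s"
proof -
  from SL obtain c where c: "c > 0" and "\<forall>s\<in>{0..1}. \<exists>D. smooth_on_interval (\<lambda>N. nuhat N s) N0 N1 D \<and>
                                 (\<forall>N\<in>{N0..N1}. D 1 N \<ge> c)"
    unfolding stretch_limited_def by blast
  with s obtain D where D: "smooth_on_interval (\<lambda>N. nuhat N s) N0 N1 D" "\<forall>N\<in>{N0..N1}. D 1 N \<ge> c"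
    by blast
  have D0: "D 0 = (\<lambda>N. nuhat N s)" using D(1) unfolding smooth_on_interval_def by auto
  have der: "\<And>x. x\<in>{N0..N1} \<Longrightarrow> (D 0 has_real_derivative D 1 x) (at x within {N0..N1})"
    using D(1) unfolding smooth_on_interval_def by (metis One_nat_def)
  have cont: "continuous_on {N0..N1} (D 0)"
    using der by (meson DERIV_continuous continuous_at_imp_continuous_on continuous_on_eq_continuous_within)
  have "D 0 x < D 0 y"
  proof (rule DERIV_pos_imp_increasing_open[OF xy(2)])
    fix t assume t: "x < t" "t < y"
    have "at t within {N0..N1} = at t" using t xy by (intro at_within_Icc_at) auto
    then have "DERIV (D 0) t :> D 1 t" using der[of t] t xy by auto
    moreover have "D 1 t \<ge> c" using D(2) t xy by auto
    then have "D 1 t > 0" using c by linarith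
    ultimately show "\<exists>y. DERIV (D 0) t :> y \<and> y > 0" by blast
  next
    show "continuous_on {x..y} (D 0)" by (rule continuous_on_subset[OF cont]) (use xy in auto)
  qed
  then show ?thesis using D0 by simp
qed

lemma nu_mono:
  assumes SL: "stretch_limited nuhat N0 N1 nu0 nu1"
    and s: "s \<in> {0..1}" and xy: "x \<le> y"
  shows "nuhat x s \<le> nuhat y s"
proof -
  have P: "N0 < 0" "0 < N1" "\<forall>N. N \<le> N0 \<longrightarrow> nuhat N s = nu0" "\<forall>N. N \<ge> N1 \<longrightarrow> nuhat N s = nu1"
     "\<forall>N\<in>{N0..N1}. nu0 \<le> nuhat N s \<and> nuhat N s \<le> nu1"
    using SL s unfolding stretch_limited_def by auto
  define x' where "x' = min N1 (max x N0)"
  define y' where "y' = min N1 (max y N0)"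
  have ex: "nuhat x s = nuhat x' s" "nuhat y s = nuhat y' s"
    using P unfolding x'_def y'_def by (auto simp: min_def max_def)
  have "x' \<le> y'" using xy unfolding x'_def y'_def by auto
  moreover have "N0 \<le> x'" "y' \<le> N1" using P unfolding x'_def y'_def by auto
  ultimately have "nuhat x' s \<le> nuhat y' s"
    using nu_strict[OF SL s, of x' y'] by (cases "x' = y'") auto
  then show ?thesis using ex by simp
qed

lemma nu_collapse:
  assumes SL: "stretch_limited nuhat N0 N1 nu0 nu1"
    and s: "s \<in> {0..1}" and xy: "x < y" and eq: "nuhat x s = nuhat y s"
  shows "nuhat x s = nu0 \<or> nuhat x s = nu1"
proof -
  have P: "N0 < 0" "0 < N1" "\<forall>N. N \<le> N0 \<longrightarrow> nuhat N s = nu0" "\<forall>N. N \<ge> N1 \<longrightarrow> nuhat N s = nu1"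
    using SL s unfolding stretch_limited_def by auto
  show ?thesis
  proof (rule ccontr)
    assume n: "\<not> ?thesis"
    then have "x < N1" "N0 < y" using P eq by (auto simp: not_le[symmetric])
    define x' where "x' = max x N0"
    define y' where "y' = min y N1"
    have "x' < y'" "N0 \<le> x'" "y' \<le> N1" "x \<le> x'" "y' \<le> y"
      using \<open>x < N1\<close> \<open>N0 < y\<close> xy P unfolding x'_def y'_def by auto
    then have "nuhat x s \<le> nuhat x' s" "nuhat x' s < nuhat y' s" "nuhat y' s \<le> nuhat y s"
      using nu_mono[OF SL s] nu_strict[OF SL s] by auto
    then show False using eq by simp
  qed
qed

theorem proposition3p1:
  fixes nuhat :: "real \<Rightarrow> real \<Rightarrow> real" and N0 N1 nu0 nu1 g b :: real
    and rhoA :: "real \<Rightarrow> real"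
  assumes SL: "stretch_limited nuhat N0 N1 nu0 nu1"
    and nu_cont: "continuous_on (UNIV \<times> {0..1}) (\<lambda>(N, s). nuhat N s)"
    and nu_range: "\<forall>N. \<forall>s\<in>{0..1}. nu0 \<le> nuhat N s \<and> nuhat N s \<le> nu1"
    and g_pos: "g > 0"
    and rho_cont: "continuous_on {0..1} rhoA"
    and rho_pos: "\<forall>s\<in>{0..1}. rhoA s > 0"
    and b_range: "nu0 \<le> b" "b \<le> nu1"
  shows "(\<exists>a. vertical_catenary_solution nuhat g rhoA b
                 (catN g rhoA a) (catn g rhoA a) (catr nuhat g rhoA a))
       \<and> (nu0 < b \<and> b < nu1 \<longrightarrow>
            (\<exists>!a. vertical_catenary_solution nuhat g rhoA b
                 (catN g rhoA a) (catn g rhoA a) (catr nuhat g rhoA a)))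
       \<and> (b = nu0 \<or> b = nu1 \<longrightarrow>
            (\<forall>a a'. vertical_catenary_solution nuhat g rhoA b
                       (catN g rhoA a) (catn g rhoA a) (catr nuhat g rhoA a)
                   \<and> vertical_catenary_solution nuhat g rhoA b
                       (catN g rhoA a') (catn g rhoA a') (catr nuhat g rhoA a')
                   \<longrightarrow> (\<forall>s\<in>{0..1}. catr nuhat g rhoA a s = catr nuhat g rhoA a' s)))"
proof -
  define F where "F = catF g rhoA"
  define h where "h = (\<lambda>a \<xi>. nuhat (a + F \<xi>) \<xi>)"
  define G where "G = (\<lambda>a. integral {0..1} (h a))"
  have P: "N0 < 0" "0 < N1" "0 < nu0" "nu0 < 1" "1 < nu1"
    "\<forall>s\<in>{0..1}. \<forall>N. N \<le> N0 \<longrightarrow> nuhat N s = nu0"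
    "\<forall>s\<in>{0..1}. \<forall>N. N \<ge> N1 \<longrightarrow> nuhat N s = nu1"
    using SL unfolding stretch_limited_def by auto
  have rint: "(\<lambda>\<xi>. g * rhoA \<xi>) integrable_on {0..1}"
    using rho_cont by (intro integrable_continuous_real continuous_intros)
  have Fc: "continuous_on {0..1} F"
    unfolding F_def catF_def by (rule indefinite_integral_continuous_1[OF rint])
  have F0: "F 0 = 0" unfolding F_def catF_def by simp
  have Fnn: "F \<xi> \<ge> 0" if "\<xi> \<in> {0..1}" for \<xi>
    unfolding F_def catF_def
    using rho_pos g_pos that by (intro integral_nonneg integrable_on_subinterval[OF rint]) (auto intro: less_imp_le)
  have Fle: "F \<xi> \<le> F 1" if "\<xi> \<in> {0..1}" for \<xi>
    unfolding F_def catF_def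
    using rho_pos g_pos that by (intro integral_subset_le integrable_on_subinterval[OF rint]) (auto intro: less_imp_le)
  have hc2: "continuous_on (UNIV \<times> {0..1}) (\<lambda>(a, \<xi>). h a \<xi>)"
  proof -
    have "continuous_on (UNIV \<times> {0..1}) (\<lambda>p. (fst p + F (snd p), snd p))"
      by (intro continuous_intros continuous_on_compose2[OF Fc]) auto
    moreover have "(\<lambda>p. (fst p + F (snd p), snd p)) ` (UNIV \<times> {0..1}) \<subseteq> UNIV \<times> {0..1}"
      by auto
    ultimately have "continuous_on (UNIV \<times> {0..1}) ((\<lambda>(N, s). nuhat N s) \<circ> (\<lambda>p. (fst p + F (snd p), snd p)))"
      by (intro continuous_on_compose continuous_on_subset[OF nu_cont]) auto
    then show ?thesis unfolding h_def by (simp add: o_def case_prod_beta)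
  qed
  have hc: "continuous_on {0..1} (h a)" for a
  proof -
    have "continuous_on {0..1} ((\<lambda>(a, \<xi>). h a \<xi>) \<circ> (\<lambda>\<xi>. (a, \<xi>)))"
      by (intro continuous_on_compose continuous_on_subset[OF hc2] continuous_intros) auto
    then show ?thesis by (simp add: o_def)
  qed
  have Gc: "continuous_on UNIV G"
    unfolding G_def using integral_continuous_on_param[of UNIV 0 1 h] hc2 by simp
  have catN_eq: "catN g rhoA a = (\<lambda>s. a + F s)" for a
    unfolding catN_def F_def by auto
  have catr_eq: "catr nuhat g rhoA a = (\<lambda>s. integral {0..s} (h a) *\<^sub>R kvec)" for a
    unfolding catr_def catN_eq h_def by auto
  have kne: "kvec \<noteq> 0" unfolding kvec_def by (metis norm_axis_1 norm_zero zero_neq_one)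
  have hge: "h a \<xi> \<ge> nu0" if "\<xi> \<in> {0..1}" for a \<xi> using nu_range that unfolding h_def by auto
  have sol_imp: "G a = b" if "vertical_catenary_solution nuhat g rhoA b
                 (catN g rhoA a) (catn g rhoA a) (catr nuhat g rhoA a)" for a
  proof -
    have "catr nuhat g rhoA a 1 = b *\<^sub>R kvec" using that unfolding vertical_catenary_solution_def by auto
    then have "G a *\<^sub>R kvec = b *\<^sub>R kvec" unfolding catr_eq G_def by simp
    then show ?thesis using kne by (simp add: scaleR_cancel_right)
  qed
  have imp_sol: "vertical_catenary_solution nuhat g rhoA b
                 (catN g rhoA a) (catn g rhoA a) (catr nuhat g rhoA a)" if Gb: "G a = b" for a
    unfolding vertical_catenary_solution_def
  proof (intro conjI ballI)
    fix s :: real assume s: "s \<in> {0..1}"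
    show "catn g rhoA a s = catn g rhoA a 0 + catF g rhoA s *\<^sub>R kvec"
      unfolding catn_def catN_eq using F0 by (simp add: F_def algebra_simps)
  next
    show "\<exists>z. \<forall>s\<in>{0..1}. catr nuhat g rhoA a s = z s *\<^sub>R kvec"
      unfolding catr_eq by (rule exI[of _ "\<lambda>s. integral {0..s} (h a)"]) simp
  next
    show "catr nuhat g rhoA a 0 = 0" unfolding catr_eq by simp
  next
    show "catr nuhat g rhoA a 1 = b *\<^sub>R kvec" unfolding catr_eq using Gb G_def by simp
  next
    fix s :: real assume s: "s \<in> {0..1}"
    have d1: "((\<lambda>u. integral {0..u} (h a)) has_real_derivative h a s) (at s within {0..1})"
      using integral_has_vector_derivative[OF hc s] by (simp add: has_real_derivative_iff_has_vector_derivative)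
    have d: "(catr nuhat g rhoA a has_vector_derivative h a s *\<^sub>R kvec) (at s within {0..1})"
      unfolding catr_eq using has_vector_derivative_scaleR[OF d1, of "\<lambda>_. kvec" 0] by simp
    have pos: "h a s > 0" using hge[OF s, of a] P(3) by linarith
    show "\<exists>v. (catr nuhat g rhoA a has_vector_derivative v) (at s within {0..1}) \<and> v \<noteq> 0 \<and>
          catn g rhoA a s = catN g rhoA a s *\<^sub>R ((1 / norm v) *\<^sub>R v) \<and> norm v = nuhat (catN g rhoA a s) s"
    proof (intro exI conjI)
      show "(catr nuhat g rhoA a has_vector_derivative h a s *\<^sub>R kvec) (at s within {0..1})" by (rule d)
      show "h a s *\<^sub>R kvec \<noteq> 0" using pos kne by simp
      have nk: "norm kvec = 1" unfolding kvec_def by simp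
      show "catn g rhoA a s = catN g rhoA a s *\<^sub>R ((1 / norm (h a s *\<^sub>R kvec)) *\<^sub>R (h a s *\<^sub>R kvec))"
        unfolding catn_def using pos nk by simp
      show "norm (h a s *\<^sub>R kvec) = nuhat (catN g rhoA a s) s"
        using pos nk unfolding catN_eq h_def by simp
    qed
  qed
  have hmono: "h a \<xi> \<le> h a' \<xi>" if "a \<le> a'" "\<xi> \<in> {0..1}" for a a' \<xi>
    unfolding h_def using nu_mono[OF SL that(2)] that(1) by simp
  have same: "\<forall>\<xi>\<in>{0..1}. h a \<xi> = h a' \<xi>" if "G a = b" "G a' = b" "a \<le> a'" for a a'
  proof -
    have i0: "integral {0..1} (\<lambda>\<xi>. h a' \<xi> - h a \<xi>) = 0"
      using that unfolding G_def
      by (subst integral_diff) (auto intro: integrable_continuous_real hc)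
    have cd: "continuous_on {0..1} (\<lambda>\<xi>. h a' \<xi> - h a \<xi>)"
      by (intro continuous_intros hc)
    have nn: "\<And>x. x \<in> {0..1} \<Longrightarrow> 0 \<le> h a' x - h a x"
      using hmono[OF that(3)] by (simp only: diff_ge_0_iff_ge)
    have "\<forall>\<xi>\<in>{0..1}. h a' \<xi> - h a \<xi> = 0"
      using integral_eq_0_iff[of 0 1 "\<lambda>\<xi>. h a' \<xi> - h a \<xi>", OF cd _ nn] i0 by simp
    then show ?thesis by simp
  qed
  have same2: "\<forall>\<xi>\<in>{0..1}. h a \<xi> = h a' \<xi>" if "G a = b" "G a' = b" for a a'
  proof (cases "a \<le> a'")
    case True
    show ?thesis using same[OF that True] .
  next
    case False
    then have "a' \<le> a" by simp
    from same[OF that(2) that(1) this] show ?thesis by (metis)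
  qed
  have Glo: "G (N0 - F 1) = nu0"
  proof -
    have "\<forall>\<xi>\<in>{0..1}. h (N0 - F 1) \<xi> = nu0"
      using P(6) Fle unfolding h_def by auto
    then have "G (N0 - F 1) = integral {0..1} (\<lambda>_::real. nu0)"
      unfolding G_def by - (rule Henstock_Kurzweil_Integration.integral_cong, auto)
    then show ?thesis by simp
  qed
  have Ghi: "G N1 = nu1"
  proof -
    have "\<forall>\<xi>\<in>{0..1}. h N1 \<xi> = nu1"
      using P(7) Fnn unfolding h_def by auto
    then have "G N1 = integral {0..1} (\<lambda>_::real. nu1)"
      unfolding G_def by - (rule Henstock_Kurzweil_Integration.integral_cong, auto)
    then show ?thesis by simp
  qed
  have "N0 - F 1 \<le> N1" using P Fnn[of 1] by simp
  then obtain a0 where a0: "G a0 = b"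
    using IVT'[of G "N0 - F 1" b N1] Glo Ghi b_range continuous_on_subset[OF Gc, of "{N0 - F 1..N1}"] by auto
  have part1: "\<exists>a. vertical_catenary_solution nuhat g rhoA b
                 (catN g rhoA a) (catn g rhoA a) (catr nuhat g rhoA a)"
    using imp_sol[OF a0] by blast
  have part3: "\<forall>a a'. vertical_catenary_solution nuhat g rhoA b
                       (catN g rhoA a) (catn g rhoA a) (catr nuhat g rhoA a)
                   \<and> vertical_catenary_solution nuhat g rhoA b
                       (catN g rhoA a') (catn g rhoA a') (catr nuhat g rhoA a')
                   \<longrightarrow> (\<forall>s\<in>{0..1}. catr nuhat g rhoA a s = catr nuhat g rhoA a' s)"
  proof (intro allI impI ballI)
    fix a a' s :: real
    assume "vertical_catenary_solution nuhat g rhoA b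
                       (catN g rhoA a) (catn g rhoA a) (catr nuhat g rhoA a)
                   \<and> vertical_catenary_solution nuhat g rhoA b
                       (catN g rhoA a') (catn g rhoA a') (catr nuhat g rhoA a')"
    then have e: "\<forall>\<xi>\<in>{0..1}. h a \<xi> = h a' \<xi>" using sol_imp same2 by blast
    assume s: "s \<in> {0..1}"
    have "integral {0..s} (h a) = integral {0..s} (h a')"
      using e s by - (rule Henstock_Kurzweil_Integration.integral_cong, auto)
    then show "catr nuhat g rhoA a s = catr nuhat g rhoA a' s" unfolding catr_eq by simp
  qed
  have part2: "\<exists>!a. vertical_catenary_solution nuhat g rhoA b
                 (catN g rhoA a) (catn g rhoA a) (catr nuhat g rhoA a)"
    if bs: "nu0 < b" "b < nu1"
  proof -
    have uniq: "a = a'" if "G a = b" "G a' = b" "a \<le> a'" for a a'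
    proof (rule ccontr)
      assume "a \<noteq> a'"
      then have lt: "a < a'" using that by simp
      have e: "\<forall>\<xi>\<in>{0..1}. h a \<xi> = h a' \<xi>" using same that by blast
      have two: "h a \<xi> = nu0 \<or> h a \<xi> = nu1" if "\<xi> \<in> {0..1}" for \<xi>
        using nu_collapse[OF SL that, of "a + F \<xi>" "a' + F \<xi>"] lt e that unfolding h_def by auto
      show False
      proof (cases "\<forall>\<xi>\<in>{0..1}. h a \<xi> = nu0")
        case True
        then have "G a = integral {0..1} (\<lambda>_::real. nu0)" unfolding G_def by - (rule Henstock_Kurzweil_Integration.integral_cong, auto)
        then show False using that bs by simp
      next
        case F1: False
        then obtain x1 where x1: "x1 \<in> {0..1}" "h a x1 = nu1" using two by blast
        show False
        proof (cases "\<forall>\<xi>\<in>{0..1}. h a \<xi> = nu1")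
          case True
          then have "G a = integral {0..1} (\<lambda>_::real. nu1)" unfolding G_def by - (rule Henstock_Kurzweil_Integration.integral_cong, auto)
          then show False using that bs by simp
        next
          case False
          then obtain x2 where x2: "x2 \<in> {0..1}" "h a x2 = nu0" using two by blast
          have seg: "closed_segment x1 x2 \<subseteq> {0..1}"
            using x1 x2 by (simp add: closed_segment_subset)
          have "(nu0 + nu1) / 2 \<in> closed_segment (h a x1) (h a x2)"
            using x1 x2 bs by (simp add: closed_segment_eq_real_ivl)
          then obtain x where x: "x \<in> closed_segment x1 x2" "h a x = (nu0 + nu1) / 2"
            using IVT'_closed_segment_real[of "(nu0 + nu1) / 2" "h a" x1 x2]
              continuous_on_subset[OF hc seg] by blast
          then show False using two[of x] seg bs by auto
        qed
      qed
    qed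
    show ?thesis
    proof (rule ex1I[of _ a0])
      show "vertical_catenary_solution nuhat g rhoA b
                 (catN g rhoA a0) (catn g rhoA a0) (catr nuhat g rhoA a0)" using imp_sol[OF a0] .
    next
      fix a assume "vertical_catenary_solution nuhat g rhoA b
                 (catN g rhoA a) (catn g rhoA a) (catr nuhat g rhoA a)"
      then have "G a = b" by (rule sol_imp)
      then show "a = a0" using uniq[of a a0] uniq[of a0 a] a0 by (cases "a \<le> a0") auto
    qed
  qed
  show ?thesis using part1 part2 part3 by blast
qed

end
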